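(* Consider $n$ agents in the plane with dynamics $\dot x_i(t)=v_i(t)$, $\dot v_i(t)=u_i(t)$, $x_i,v_i,u_i\in\mathbb{R}^2$, $i\in\mathcal V=\{1,\dots,n\}$, and a target with dynamics $\dot x_d=v_d$, $\dot v_d=s_1x_d$, $x_d,v_d\in\mathbb{R}^2$, where $s_1\le 0$ is a constant known to all agents. Let each agent use the controller $$u_i=-k_1x_i-k_2v_i-k_3\epsilon_i-k_4\zeta_i+k_5\eta_i,\qquad \dot\epsilon_i=\zeta_i,\qquad \dot\zeta_i=s_1\epsilon_i+e_i-k_5\eta_i,$$ with internal states $\epsilon_i,\zeta_i\in\mathbb{R}^2$, positive gains $k_1,\dots,k_5$, $e_i=x_i-x_d$ and $\eta_i=\sum_{k\in\mathcal N_i}\alpha(\|x_{i,k}\|)\frac{x_{i,k}}{\|x_{i,k}\|}$ (notation in the context). Then the agents fence the target, i.e. $\lim_{t\to\infty}P_{x_d(t)}(x(t))=0$, if and only if the gains $k_1,k_2,k_3,k_4>0$ satisfy $$k_4-s_1k_2-\frac{k_2^2(k_3-s_1k_1)}{k_1k_2-k_4}>0,\qquad \frac{k_1k_2-k_4}{k_2}>0.$$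
   Context: Fix constants $0<r<R$. Write $x_{i,k}=x_i-x_k$. The (time-varying) neighbor set of agent $i$ is $\mathcal N_i(t)=\{k\in\mathcal V,\ k\ne i:\ \|x_{i,k}(t)\|\le R\}$. The function $\alpha$ is continuous on $(r,\infty)$, with $\alpha(s)=0$ for all $s\ge R$ and $\lim_{s\to r^+}\alpha(s)=\infty$ (the paper notes it is monotonically decreasing on $(r,R]$; an example is $\alpha(s)=\frac1{s-r}-\frac1{R-r}$ for $r<s\le R$, $\alpha(s)=0$ for $s>R$). With $x=(x_1,\dots,x_n)$, the convex hull is $\mathrm{co}(x)=\{\sum_i\lambda_ix_i:\lambda_i\ge0,\sum_i\lambda_i=1\}$ and $P_{x_d}(x)=\min_{s\in\mathrm{co}(x)}\|x_d-s\|$ is the distance from the target to this hull. *)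

theory Defs
  imports "HOL-Analysis.Analysis"
begin

type_synonym vec2 = "real ^ 2"

definition neighbors :: "real \<Rightarrow> nat \<Rightarrow> (nat \<Rightarrow> vec2) \<Rightarrow> nat \<Rightarrow> nat set" where
  "neighbors R n X i = {k. k < n \<and> k \<noteq> i \<and> norm (X i - X k) \<le> R}"

definition eta :: "(real \<Rightarrow> real) \<Rightarrow> real \<Rightarrow> nat \<Rightarrow> (nat \<Rightarrow> vec2) \<Rightarrow> nat \<Rightarrow> vec2" where
  "eta \<alpha> R n X i =
     (\<Sum>k\<in>neighbors R n X i. \<alpha> (norm (X i - X k)) *\<^sub>R ((1 / norm (X i - X k)) *\<^sub>R (X i - X k)))"

definition hull_dist :: "nat \<Rightarrow> (nat \<Rightarrow> vec2) \<Rightarrow> vec2 \<Rightarrow> real" where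
  "hull_dist n X xd = infdist xd (convex hull ((\<lambda>i. X i) ` {..<n}))"

text \<open>(x, v, eps, zeta, xd, vd) is a solution of the closed-loop system on [0,\<infinity>)
  along which the agents stay at mutual distance > r (so that alpha is defined).\<close>
definition closed_loop_solution ::
  "real \<Rightarrow> real \<Rightarrow> real \<Rightarrow> real \<Rightarrow> real \<Rightarrow> real \<Rightarrow> (real \<Rightarrow> real) \<Rightarrow> real \<Rightarrow> real \<Rightarrow> nat \<Rightarrow>
   (nat \<Rightarrow> real \<Rightarrow> vec2) \<Rightarrow> (nat \<Rightarrow> real \<Rightarrow> vec2) \<Rightarrow> (nat \<Rightarrow> real \<Rightarrow> vec2) \<Rightarrow> (nat \<Rightarrow> real \<Rightarrow> vec2) \<Rightarrow>
   (real \<Rightarrow> vec2) \<Rightarrow> (real \<Rightarrow> vec2) \<Rightarrow> bool" where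
  "closed_loop_solution s1 k1 k2 k3 k4 k5 \<alpha> r R n x v \<epsilon> \<zeta> xd vd \<longleftrightarrow>
     (\<forall>t\<ge>0.
        (xd has_vector_derivative vd t) (at t within {0..}) \<and>
        (vd has_vector_derivative (s1 *\<^sub>R xd t)) (at t within {0..}) \<and>
        (\<forall>i<n. \<forall>k<n. i \<noteq> k \<longrightarrow> norm (x i t - x k t) > r) \<and>
        (\<forall>i<n.
           (x i has_vector_derivative v i t) (at t within {0..}) \<and>
           (v i has_vector_derivative
              (- k1 *\<^sub>R x i t - k2 *\<^sub>R v i t - k3 *\<^sub>R \<epsilon> i t - k4 *\<^sub>R \<zeta> i t
               + k5 *\<^sub>R eta \<alpha> R n (\<lambda>j. x j t) i)) (at t within {0..}) \<and>
           (\<epsilon> i has_vector_derivative \<zeta> i t) (at t within {0..}) \<and>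
           (\<zeta> i has_vector_derivative
              (s1 *\<^sub>R \<epsilon> i t + (x i t - xd t) - k5 *\<^sub>R eta \<alpha> R n (\<lambda>j. x j t) i))
              (at t within {0..})))"

end

theory Submission
  imports Defs "HOL-Computational_Algebra.Fundamental_Theorem_Algebra"
begin

lemma id3: fixes b1 c1 b2 c2 :: real
  shows "(b1*c2+b2*c1)*((b1+b2)*(c1+c2+b1*b2)-(b1*c2+b2*c1)) - (b1+b2)^2*(c1*c2)
     = b1*b2*((c1-c2)^2 + (b1+b2)*(b1*c2+b2*c1))"
  by (simp add: algebra_simps power2_eq_square)

lemma prod4: fixes a b c d :: complex
  shows "[:-a,1:]*[:-b,1:]*[:-c,1:]*[:-d,1:] = [: a*b*c*d, -(a*b*c+a*b*d+a*c*d+b*c*d),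
     a*b+a*c+a*d+b*c+b*d+c*d, -(a+b+c+d), 1:]"
  by (simp add: algebra_simps)

lemma roots4:
  fixes a1 a2 a3 a4 :: complex
  obtains r0 r1 r2 r3 where
    "a1 = -(r0+r1+r2+r3)" "a2 = r0*r1+r0*r2+r0*r3+r1*r2+r1*r3+r2*r3"
    "a3 = -(r0*r1*r2+r0*r1*r3+r0*r2*r3+r1*r2*r3)" "a4 = r0*r1*r2*r3"
proof -
  define p where "p = [:a4,a3,a2,a1,1:]"
  have dp: "degree p = 4" "lead_coeff p = 1" unfolding p_def by (simp_all add: numeral_eq_Suc)
  obtain root where "smult (lead_coeff p) (\<Prod>i<degree p. [:-root i, 1:]) = p"
    using complex_poly_decompose' by blast
  hence "smult (lead_coeff p) (\<Prod>i<4. [:-root i, 1:]) = p" by (simp only: dp(1))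
  hence "(\<Prod>i<4. [:-root i, 1:]) = p" by (simp only: dp(2) smult_1_left)
  moreover have "(\<Prod>i<4. [:-root i, 1:]) = [:-root 0,1:]*[:-root 1,1:]*[:-root 2,1:]*[:-root 3,1:]"
    by (simp add: numeral_eq_Suc lessThan_Suc mult.commute mult.left_commute)
  ultimately have "[:-root 0,1:]*[:-root 1,1:]*[:-root 2,1:]*[:-root 3,1:] = [:a4,a3,a2,a1,1:]"
    unfolding p_def by simp
  hence "root 0 * root 1 * root 2 * root 3 = a4 \<and> -(root 0*root 1*root 2+root 0*root 1*root 3+root 0*root 2*root 3+root 1*root 2*root 3) = a3
    \<and> root 0*root 1+root 0*root 2+root 0*root 3+root 1*root 2+root 1*root 3+root 2*root 3 = a2
    \<and> -(root 0+root 1+root 2+root 3) = a1" by (simp only: prod4 pCons_eq_iff)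
  thus ?thesis by (intro that[of "root 0" "root 1" "root 2" "root 3"]) auto
qed

definition P4 :: "real \<Rightarrow> real \<Rightarrow> real \<Rightarrow> real \<Rightarrow> complex \<Rightarrow> complex" where
  "P4 a1 a2 a3 a4 z = z^4 + of_real a1 * z^3 + of_real a2 * z^2 + of_real a3 * z + of_real a4"

lemma rf_nonreal:
  fixes a1 a2 a3 a4 :: real and l :: complex
  assumes "P4 a1 a2 a3 a4 l = 0" "Im l \<noteq> 0"
  shows "\<exists>b1 c1 b2 c2. a1 = b1+b2 \<and> a2 = c1+c2+b1*b2 \<and> a3 = b1*c2+b2*c1 \<and> a4 = c1*c2"
proof -
  define b1 where "b1 = -2 * Re l"
  define c1 where "c1 = (Re l)^2 + (Im l)^2"
  define b2 where "b2 = a1 - b1"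
  define c2 where "c2 = a2 - c1 - b1*b2"
  define r1 where "r1 = a3 - (b1*c2+b2*c1)"
  define r0 where "r0 = a4 - c1*c2"
  have q: "l^2 + of_real b1 * l + of_real c1 = 0"
    unfolding b1_def c1_def by (simp add: complex_eq_iff power2_eq_square algebra_simps)
  have "P4 a1 a2 a3 a4 l = (l^2 + of_real b1 * l + of_real c1) * (l^2 + of_real b2 * l + of_real c2)
        + of_real r1 * l + of_real r0"
    unfolding P4_def r1_def r0_def c2_def b2_def by (simp add: algebra_simps power2_eq_square power3_eq_cube power4_eq_xxxx)
  with q assms(1) have "of_real r1 * l + of_real r0 = 0" by simp
  hence "r1 * Im l = 0" "r1 * Re l + r0 = 0" by (simp_all add: complex_eq_iff)
  with assms(2) have "r1 = 0" "r0 = 0" by auto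
  hence "a1 = b1+b2 \<and> a2 = c1+c2+b1*b2 \<and> a3 = b1*c2+b2*c1 \<and> a4 = c1*c2"
    unfolding r1_def r0_def c2_def b2_def by simp
  thus ?thesis by blast
qed

lemma P4_roots:
  assumes "of_real a1 = -(r0+r1+r2+r3)" "of_real a2 = r0*r1+r0*r2+r0*r3+r1*r2+r1*r3+r2*r3"
    "of_real a3 = -(r0*r1*r2+r0*r1*r3+r0*r2*r3+r1*r2*r3)" "of_real a4 = r0*r1*r2*r3"
  shows "P4 a1 a2 a3 a4 z = (z-r0)*(z-r1)*(z-r2)*(z-r3)"
  unfolding P4_def assms by (simp add: algebra_simps power2_eq_square power3_eq_cube power4_eq_xxxx)

lemma rf:
  fixes a1 a2 a3 a4 :: real
  shows "\<exists>b1 c1 b2 c2. a1 = b1+b2 \<and> a2 = c1+c2+b1*b2 \<and> a3 = b1*c2+b2*c1 \<and> a4 = c1*c2"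
proof -
  obtain r0 r1 r2 r3 where R: "complex_of_real a1 = -(r0+r1+r2+r3)" "of_real a2 = r0*r1+r0*r2+r0*r3+r1*r2+r1*r3+r2*r3"
    "of_real a3 = -(r0*r1*r2+r0*r1*r3+r0*r2*r3+r1*r2*r3)" "of_real a4 = r0*r1*r2*r3"
    by (rule roots4[of "complex_of_real a1" "complex_of_real a2" "complex_of_real a3" "complex_of_real a4"])
  note PR = P4_roots[OF R]
  show ?thesis
  proof (cases "Im r0 = 0 \<and> Im r1 = 0 \<and> Im r2 = 0 \<and> Im r3 = 0")
    case True
    obtain x0 x1 x2 x3 where e: "r0 = of_real x0" "r1 = of_real x1" "r2 = of_real x2" "r3 = of_real x3"
      using True by (intro that[of "Re r0" "Re r1" "Re r2" "Re r3"]) (simp_all add: complex_eq_iff)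
    have "complex_of_real a1 = of_real (-(x0+x1+x2+x3))" "complex_of_real a2 = of_real (x0*x1+x0*x2+x0*x3+x1*x2+x1*x3+x2*x3)"
      "complex_of_real a3 = of_real (-(x0*x1*x2+x0*x1*x3+x0*x2*x3+x1*x2*x3))" "complex_of_real a4 = of_real (x0*x1*x2*x3)"
      using R unfolding e by simp_all
    hence "a1 = -(x0+x1+x2+x3)" "a2 = x0*x1+x0*x2+x0*x3+x1*x2+x1*x3+x2*x3"
      "a3 = -(x0*x1*x2+x0*x1*x3+x0*x2*x3+x1*x2*x3)" "a4 = x0*x1*x2*x3"
      by (simp_all only: of_real_eq_iff)
    hence "a1 = (-(x0+x1)) + (-(x2+x3)) \<and> a2 = x0*x1 + x2*x3 + (-(x0+x1))*(-(x2+x3))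
      \<and> a3 = (-(x0+x1))*(x2*x3) + (-(x2+x3))*(x0*x1) \<and> a4 = (x0*x1)*(x2*x3)"
      by (simp add: algebra_simps)
    thus ?thesis by blast
  next
    case False
    then obtain l where "l \<in> {r0,r1,r2,r3}" "Im l \<noteq> 0" by auto
    moreover then have "P4 a1 a2 a3 a4 l = 0" unfolding PR by auto
    ultimately show ?thesis using rf_nonreal by blast
  qed
qed

lemma quad_root_re:
  fixes b c :: real and l :: complex
  assumes "b > 0" "c > 0" "l^2 + of_real b * l + of_real c = 0"
  shows "Re l < 0"
proof (rule ccontr)
  assume "\<not> Re l < 0"
  hence x: "Re l \<ge> 0" by simp
  from assms(3) have e1: "(Re l)^2 - (Im l)^2 + b * Re l + c = 0" and e2: "Im l * (2 * Re l + b) = 0"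
    by (simp_all add: complex_eq_iff power2_eq_square algebra_simps)
  from e2 x assms(1) have "Im l = 0" by auto
  have "b * Re l \<ge> 0" using x assms(1) by simp
  hence p: "(Re l)^2 + b*Re l + c > 0" using assms(2) zero_le_power2[of "Re l"] by linarith
  from e1 \<open>Im l = 0\<close> have "(Re l)^2 + b*Re l + c = 0" by simp
  with p show False by simp
qed

lemma P4_factor:
  assumes "a1 = b1+b2" "a2 = c1+c2+b1*b2" "a3 = b1*c2+b2*c1" "a4 = c1*c2"
  shows "P4 a1 a2 a3 a4 z = (z^2 + of_real b1 * z + of_real c1) * (z^2 + of_real b2 * z + of_real c2)"
  unfolding P4_def assms by (simp add: algebra_simps power2_eq_square power3_eq_cube power4_eq_xxxx)

definition Hur3 :: "real \<Rightarrow> real \<Rightarrow> real \<Rightarrow> real \<Rightarrow> real" where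
  "Hur3 a1 a2 a3 a4 = a3*(a1*a2-a3) - a1^2*a4"

lemma hurwitz_suff:
  assumes "a1 > 0" "a2 > 0" "a3 > 0" "a4 > 0" "Hur3 a1 a2 a3 a4 > 0" "P4 a1 a2 a3 a4 l = 0"
  shows "Re l < 0"
proof -
  obtain b1 c1 b2 c2 where F: "a1 = b1+b2" "a2 = c1+c2+b1*b2" "a3 = b1*c2+b2*c1" "a4 = c1*c2"
    using rf by metis
  have "Hur3 a1 a2 a3 a4 = b1*b2*((c1-c2)^2 + a1*a3)" unfolding Hur3_def F using id3 by simp
  moreover have "(c1-c2)^2 + a1*a3 > 0"
  proof -
    have "a1*a3 > 0" using assms by simp
    moreover have "(c1-c2)^2 \<ge> 0" by simp
    ultimately show ?thesis by linarith
  qed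
  ultimately have "b1*b2 > 0" using assms(5) by (metis zero_less_mult_pos2)
  hence "(b1 > 0 \<and> b2 > 0) \<or> (b1 < 0 \<and> b2 < 0)" by (simp add: zero_less_mult_iff)
  with F(1) assms(1) have b: "b1 > 0" "b2 > 0" by linarith+
  from F(4) assms(4) have "c1*c2 > 0" by simp
  hence cc: "(c1 > 0 \<and> c2 > 0) \<or> (c1 < 0 \<and> c2 < 0)" by (simp add: zero_less_mult_iff)
  have "\<not> (c1 < 0 \<and> c2 < 0)"
  proof
    assume "c1 < 0 \<and> c2 < 0"
    hence "b1*c2 < 0" "b2*c1 < 0" using b by (simp_all add: mult_pos_neg)
    thus False using F(3) assms(3) by linarith
  qed
  with cc have c: "c1 > 0" "c2 > 0" by auto
  from assms(6) P4_factor[OF F] have "l^2 + of_real b1 * l + of_real c1 = 0 \<or> l^2 + of_real b2 * l + of_real c2 = 0"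
    by simp
  thus ?thesis using quad_root_re b c by blast
qed

lemma quad_root_exists:
  fixes b c :: real
  assumes "b \<le> 0"
  shows "\<exists>l. l^2 + of_real b * l + of_real c = 0 \<and> Re l \<ge> 0"
proof -
  define s where "s = csqrt (of_real (b^2 - 4*c))"
  have s2: "s^2 = of_real (b^2 - 4*c)" unfolding s_def by simp
  have rs: "Re s \<ge> 0" unfolding s_def by (rule Re_csqrt)
  define l where "l = (s - of_real b) / 2"
  have "l^2 + of_real b * l + of_real c = (s^2 - of_real (b^2 - 4*c)) / 4"
    unfolding l_def by (simp add: power2_eq_square field_simps)
  also have "\<dots> = 0" using s2 by simp
  finally have 1: "l^2 + of_real b * l + of_real c = 0" .
  have 2: "Re l \<ge> 0" unfolding l_def using rs assms by simp
  show ?thesis using 1 2 by blast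
qed

lemma hurwitz_nec:
  assumes "a1 > 0" "a2 > 0" "a3 > 0" "a4 > 0" "Hur3 a1 a2 a3 a4 \<le> 0"
  shows "\<exists>l. P4 a1 a2 a3 a4 l = 0 \<and> Re l \<ge> 0"
proof -
  obtain b1 c1 b2 c2 where F: "a1 = b1+b2" "a2 = c1+c2+b1*b2" "a3 = b1*c2+b2*c1" "a4 = c1*c2"
    using rf by metis
  have "Hur3 a1 a2 a3 a4 = b1*b2*((c1-c2)^2 + a1*a3)" unfolding Hur3_def F using id3 by simp
  moreover have "(c1-c2)^2 + a1*a3 > 0"
  proof -
    have "a1*a3 > 0" using assms by simp
    moreover have "(c1-c2)^2 \<ge> 0" by simp
    ultimately show ?thesis by linarith
  qed
  ultimately have "b1*b2 \<le> 0" using assms(5) by (metis not_le mult_pos_pos)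
  hence "b1 \<le> 0 \<or> b2 \<le> 0" by (metis not_le mult_pos_pos)
  thus ?thesis
  proof
    assume "b1 \<le> 0"
    then obtain l where "l^2 + of_real b1 * l + of_real c1 = 0 \<and> Re l \<ge> 0" using quad_root_exists by blast
    thus ?thesis using P4_factor[OF F] by auto
  next
    assume "b2 \<le> 0"
    then obtain l where "l^2 + of_real b2 * l + of_real c2 = 0 \<and> Re l \<ge> 0" using quad_root_exists by blast
    thus ?thesis using P4_factor[OF F] by auto
  qed
qed

lemma fo_aux_ineq:
  fixes xu xv g1 g2 p q mu :: real
  assumes "mu > 0" "p = - mu"
  shows "2*xu*(p*xu - q*xv + g1) + 2*xv*(p*xv + q*xu + g2) \<le> -mu*(xu^2+xv^2) + (g1^2+g2^2)/mu"
proof -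
  have "(mu*xu - g1)^2 \<ge> 0" "(mu*xv - g2)^2 \<ge> 0" by simp_all
  hence "2*mu*xu*g1 \<le> mu^2*xu^2 + g1^2" "2*mu*xv*g2 \<le> mu^2*xv^2 + g2^2"
    by (simp_all add: power2_eq_square algebra_simps)
  hence "2*xu*g1 \<le> mu*xu^2 + g1^2/mu" "2*xv*g2 \<le> mu*xv^2 + g2^2/mu"
    using assms(1) by (simp_all add: field_simps power2_eq_square)
  thus ?thesis using assms by (simp add: algebra_simps power2_eq_square add_divide_distrib)
qed

lemma fo:
  fixes f g :: "real \<Rightarrow> complex" and l :: complex
  assumes l: "Re l < 0"
    and d: "\<And>t. t \<ge> 0 \<Longrightarrow> (f has_vector_derivative (l * f t + g t)) (at t within {0..})"
    and g: "(g \<longlongrightarrow> 0) at_top"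
  shows "(f \<longlongrightarrow> 0) at_top"
proof -
  define mu where "mu = - Re l"
  have mu: "mu > 0" using l unfolding mu_def by simp
  define N where "N t = (Re (f t))^2 + (Im (f t))^2" for t
  define N' where "N' t = 2*Re(f t)*Re(l*f t + g t) + 2*Im(f t)*Im(l * f t + g t)" for t
  have dN: "(N has_real_derivative N' t) (at t)" if "t > 0" for t
  proof -
    have "at t within {0..} = at t" using that by (intro at_within_interior) simp
    with d[of t] that have df: "(f has_vector_derivative (l * f t + g t)) (at t)" by simp
    have "((\<lambda>t. Re (f t)) has_vector_derivative Re (l * f t + g t)) (at t)"
      by (rule bounded_linear.has_vector_derivative[OF bounded_linear_Re df])
    hence dr: "((\<lambda>t. Re (f t)) has_real_derivative Re (l * f t + g t)) (at t)"
      by (simp add: has_real_derivative_iff_has_vector_derivative)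
    have "((\<lambda>t. Im (f t)) has_vector_derivative Im (l * f t + g t)) (at t)"
      by (rule bounded_linear.has_vector_derivative[OF bounded_linear_Im df])
    hence di: "((\<lambda>t. Im (f t)) has_real_derivative Im (l * f t + g t)) (at t)"
      by (simp add: has_real_derivative_iff_has_vector_derivative)
    show ?thesis unfolding N_def[abs_def] N'_def
      by (rule derivative_eq_intros dr di refl | simp)+
  qed
  have bnd: "N' t \<le> -mu * N t + (cmod (g t))^2/mu" for t
  proof -
    have "N' t = 2*Re(f t)*(Re l*Re (f t) - Im l*Im (f t) + Re (g t)) + 2*Im(f t)*(Re l*Im (f t) + Im l*Re (f t) + Im (g t))"
      unfolding N'_def by simp
    also have "\<dots> \<le> -mu*((Re (f t))^2+(Im (f t))^2) + ((Re (g t))^2+(Im (g t))^2)/mu"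
      by (rule fo_aux_ineq[OF mu]) (simp add: mu_def)
    finally show ?thesis unfolding N_def cmod_power2 .
  qed
  have ev: "eventually (\<lambda>t. N t < e) at_top" if e: "e > 0" for e
  proof -
    have "((\<lambda>t. (cmod (g t))^2) \<longlongrightarrow> 0) at_top"
      using tendsto_power[OF tendsto_norm[OF g], of 2] by simp
    moreover have "mu^2*e/2 > 0" using mu e by simp
    ultimately have "eventually (\<lambda>t. (cmod (g t))^2 < mu^2*e/2) at_top"
      by (rule order_tendstoD)
    then obtain T0 where T0: "\<And>t. t \<ge> T0 \<Longrightarrow> (cmod (g t))^2 < mu^2*e/2"
      unfolding eventually_at_top_linorder by blast
    define T where "T = max T0 1"
    define Phi where "Phi t = exp (mu*t) * (N t - e/2)" for t
    have mono: "Phi t \<le> Phi T" if "t \<ge> T" for t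
    proof (rule DERIV_nonpos_imp_nonincreasing[OF that])
      fix x assume x: "T \<le> x" "x \<le> t"
      hence x0: "x > 0" "x \<ge> T0" unfolding T_def by auto
      have "(Phi has_real_derivative (exp (mu*x) * mu * (N x - e/2) + exp (mu*x) * N' x)) (at x)"
        unfolding Phi_def[abs_def]
        by (rule derivative_eq_intros dN[OF x0(1)] refl | simp)+
      moreover have "exp (mu*x) * mu * (N x - e/2) + exp (mu*x) * N' x \<le> 0"
      proof -
        have "mu * (N x - e/2) + N' x \<le> mu * N x - mu*e/2 - mu*N x + (cmod (g x))^2/mu"
          using bnd[of x] by (simp add: algebra_simps)
        also have "(cmod (g x))^2/mu \<le> mu*e/2"
          using T0[OF x0(2)] mu by (simp add: field_simps power2_eq_square)
        finally have "mu * (N x - e/2) + N' x \<le> 0" by simp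
        hence "exp (mu*x) * (mu * (N x - e/2) + N' x) \<le> 0"
          by (simp add: mult_nonneg_nonpos)
        thus ?thesis by (simp add: algebra_simps)
      qed
      ultimately show "\<exists>y. DERIV Phi x :> y \<and> y \<le> 0" by blast
    qed
    define K where "K = exp (mu*T) * \<bar>N T - e/2\<bar>"
    have K0: "K \<ge> 0" unfolding K_def by simp
    have "N t < e" if t: "t \<ge> max T (2*K/(e*mu))" for t
    proof -
      have tT: "t \<ge> T" and tK: "t \<ge> 2*K/(e*mu)" using t by auto
      have "exp (mu*T) * (N T - e/2) \<le> exp (mu*T) * \<bar>N T - e/2\<bar>"
        by (rule mult_left_mono) auto
      hence "exp (mu*t) * (N t - e/2) \<le> K" using mono[OF tT] unfolding Phi_def K_def
        by linarith
      hence "N t - e/2 \<le> K / exp (mu*t)" by (simp add: field_simps mult.commute)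
      also have "K / exp (mu*t) \<le> K / (1 + mu*t)"
      proof (rule divide_left_mono[OF _ K0])
        show "1 + mu*t \<le> exp (mu*t)" by (rule exp_ge_add_one_self)
        have "t \<ge> 0" using tT unfolding T_def by simp
        thus "0 < exp (mu * t) * (1 + mu * t)" using mu by (simp add: add_pos_nonneg)
      qed
      also have "K / (1 + mu*t) < e/2"
      proof -
        have "t \<ge> 0" using tT unfolding T_def by simp
        have "mu * t \<ge> 2*K/e" using tK mu e by (simp add: field_simps)
        hence "2*K < e * (1 + mu*t)" using e by (simp add: field_simps)
        thus ?thesis using \<open>t \<ge> 0\<close> mu by (simp add: field_simps add_pos_nonneg)
      qed
      finally show ?thesis by simp
    qed
    thus ?thesis unfolding eventually_at_top_linorder by blast
  qed
  show ?thesis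
  proof (rule tendstoI)
    fix e :: real assume e: "e > 0"
    have "eventually (\<lambda>t. N t < e^2) at_top" using ev e by simp
    thus "eventually (\<lambda>t. dist (f t) 0 < e) at_top"
    proof (rule eventually_mono)
      fix t assume "N t < e^2"
      hence "sqrt (N t) < sqrt (e^2)" by (simp only: real_sqrt_less_iff)
      hence "sqrt (N t) < e" using e by simp
      thus "dist (f t) 0 < e" unfolding N_def by (simp add: cmod_def)
    qed
  qed
qed

lemma vd_eq: "(f has_vector_derivative a) F \<Longrightarrow> a = b \<Longrightarrow> (f has_vector_derivative b) F" by simp
lemma fd_eq: "(f has_field_derivative a) F \<Longrightarrow> a = b \<Longrightarrow> (f has_field_derivative b) F" by simp

lemma comp:
  fixes D0 D1 D2 D3 :: "real \<Rightarrow> real" and a1 a2 a3 a4 :: real and l0 l1 l2 l3 :: complex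
  assumes R: "of_real a1 = -(l0+l1+l2+l3)" "of_real a2 = l0*l1+l0*l2+l0*l3+l1*l2+l1*l3+l2*l3"
    "of_real a3 = -(l0*l1*l2+l0*l1*l3+l0*l2*l3+l1*l2*l3)" "of_real a4 = l0*l1*l2*l3"
    and re: "Re l0 < 0" "Re l1 < 0" "Re l2 < 0" "Re l3 < 0"
    and d0: "\<And>t. t \<ge> 0 \<Longrightarrow> (D0 has_real_derivative D1 t) (at t within {0..})"
    and d1: "\<And>t. t \<ge> 0 \<Longrightarrow> (D1 has_real_derivative D2 t) (at t within {0..})"
    and d2: "\<And>t. t \<ge> 0 \<Longrightarrow> (D2 has_real_derivative D3 t) (at t within {0..})"
    and d3: "\<And>t. t \<ge> 0 \<Longrightarrow> (D3 has_real_derivative (-(a4*D0 t + a3*D1 t + a2*D2 t + a1*D3 t))) (at t within {0..})"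
  shows "(D0 \<longlongrightarrow> 0) at_top" "(D2 \<longlongrightarrow> 0) at_top"
proof -
  define w0 where "w0 t = complex_of_real (D0 t)" for t
  define w1 where "w1 t = complex_of_real (D1 t) - l0 * of_real (D0 t)" for t
  define w2 where "w2 t = complex_of_real (D2 t) - (l0+l1) * of_real (D1 t) + (l0*l1) * of_real (D0 t)" for t
  define w3 where "w3 t = complex_of_real (D3 t) - (l0+l1+l2) * of_real (D2 t)
     + (l0*l1+l0*l2+l1*l2) * of_real (D1 t) - (l0*l1*l2) * of_real (D0 t)" for t
  have dw3: "(w3 has_vector_derivative (l3 * w3 t + 0)) (at t within {0..})" if t: "t \<ge> 0" for t
  proof (rule vd_eq)
    show "(w3 has_vector_derivative (of_real (-(a4*D0 t + a3*D1 t + a2*D2 t + a1*D3 t))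
       - (l0+l1+l2) * of_real (D3 t) + (l0*l1+l0*l2+l1*l2) * of_real (D2 t) - (l0*l1*l2) * of_real (D1 t)))
       (at t within {0..})"
      unfolding w3_def[abs_def]
      by (intro has_vector_derivative_diff has_vector_derivative_add has_vector_derivative_mult_right
          has_vector_derivative_of_real d0[OF t] d1[OF t] d2[OF t] d3[OF t])
    show "of_real (-(a4*D0 t + a3*D1 t + a2*D2 t + a1*D3 t))
       - (l0+l1+l2) * of_real (D3 t) + (l0*l1+l0*l2+l1*l2) * of_real (D2 t) - (l0*l1*l2) * of_real (D1 t)
       = l3 * w3 t + 0"
      unfolding w3_def of_real_minus of_real_add of_real_mult R by (simp add: algebra_simps)
  qed
  have dw2: "(w2 has_vector_derivative (l2 * w2 t + w3 t)) (at t within {0..})" if t: "t \<ge> 0" for t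
  proof (rule vd_eq)
    show "(w2 has_vector_derivative (of_real (D3 t) - (l0+l1) * of_real (D2 t) + (l0*l1) * of_real (D1 t)))
       (at t within {0..})"
      unfolding w2_def[abs_def]
      by (intro has_vector_derivative_diff has_vector_derivative_add has_vector_derivative_mult_right
          has_vector_derivative_of_real d0[OF t] d1[OF t] d2[OF t])
    show "of_real (D3 t) - (l0+l1) * of_real (D2 t) + (l0*l1) * of_real (D1 t) = l2 * w2 t + w3 t"
      unfolding w2_def w3_def by (simp add: algebra_simps)
  qed
  have dw1: "(w1 has_vector_derivative (l1 * w1 t + w2 t)) (at t within {0..})" if t: "t \<ge> 0" for t
  proof (rule vd_eq)
    show "(w1 has_vector_derivative (of_real (D2 t) - l0 * of_real (D1 t))) (at t within {0..})"
      unfolding w1_def[abs_def]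
      by (intro has_vector_derivative_diff has_vector_derivative_mult_right
          has_vector_derivative_of_real d0[OF t] d1[OF t])
    show "of_real (D2 t) - l0 * of_real (D1 t) = l1 * w1 t + w2 t"
      unfolding w1_def w2_def by (simp add: algebra_simps)
  qed
  have dw0: "(w0 has_vector_derivative (l0 * w0 t + w1 t)) (at t within {0..})" if t: "t \<ge> 0" for t
  proof (rule vd_eq)
    show "(w0 has_vector_derivative (of_real (D1 t))) (at t within {0..})"
      unfolding w0_def[abs_def] by (intro has_vector_derivative_of_real d0[OF t])
    show "of_real (D1 t) = l0 * w0 t + w1 t"
      unfolding w1_def w0_def by (simp add: algebra_simps)
  qed
  have t3: "(w3 \<longlongrightarrow> 0) at_top" apply (rule fo[OF re(4) dw3]) apply assumption apply (rule tendsto_const) done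
  have t2: "(w2 \<longlongrightarrow> 0) at_top" by (rule fo[OF re(3) dw2 t3])
  have t1: "(w1 \<longlongrightarrow> 0) at_top" by (rule fo[OF re(2) dw1 t2])
  have t0: "(w0 \<longlongrightarrow> 0) at_top" by (rule fo[OF re(1) dw0 t1])
  have "((\<lambda>t. complex_of_real (D0 t)) \<longlongrightarrow> 0) at_top" using t0 unfolding w0_def .
  thus "(D0 \<longlongrightarrow> 0) at_top" using tendsto_of_real_iff[where 'a=complex, of D0 0 at_top] by simp
  have "((\<lambda>t. w2 t + (l0+l1) * (w1 t + l0 * w0 t) - (l0*l1) * w0 t) \<longlongrightarrow> 0 + (l0+l1) * (0 + l0 * 0) - (l0*l1) * 0) at_top"
    by (intro tendsto_intros t0 t1 t2)
  moreover have "(\<lambda>t. w2 t + (l0+l1) * (w1 t + l0 * w0 t) - (l0*l1) * w0 t) = (\<lambda>t. complex_of_real (D2 t))"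
    unfolding w0_def w1_def w2_def by (simp add: fun_eq_iff algebra_simps)
  ultimately have "((\<lambda>t. complex_of_real (D2 t)) \<longlongrightarrow> 0) at_top" by simp
  thus "(D2 \<longlongrightarrow> 0) at_top" using tendsto_of_real_iff[where 'a=complex, of D2 0 at_top] by simp
qed

lemma scal:
  fixes X V E Z xd vd :: "real \<Rightarrow> real" and k1 k2 k3 k4 s1 :: real
  assumes k: "k1 > 0" "k2 > 0" "k3 > 0" "k4 > 0" "s1 \<le> 0"
    and H: "Hur3 k2 (k1 - s1) (k4 - s1*k2) (k3 - s1*k1) > 0"
    and dX: "\<And>t. t \<ge> 0 \<Longrightarrow> (X has_real_derivative V t) (at t within {0..})"
    and dV: "\<And>t. t \<ge> 0 \<Longrightarrow> (V has_real_derivative (-k1*X t - k2*V t - k3*E t - k4*Z t)) (at t within {0..})"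
    and dE: "\<And>t. t \<ge> 0 \<Longrightarrow> (E has_real_derivative Z t) (at t within {0..})"
    and dZ: "\<And>t. t \<ge> 0 \<Longrightarrow> (Z has_real_derivative (s1*E t + X t - xd t)) (at t within {0..})"
    and dxd: "\<And>t. t \<ge> 0 \<Longrightarrow> (xd has_real_derivative vd t) (at t within {0..})"
    and dvd: "\<And>t. t \<ge> 0 \<Longrightarrow> (vd has_real_derivative (s1 * xd t)) (at t within {0..})"
  shows "((\<lambda>t. X t - xd t) \<longlongrightarrow> 0) at_top"
proof -
  define a1 where "a1 = k2"
  define a2 where "a2 = k1 - s1"
  define a3 where "a3 = k4 - s1*k2"
  define a4 where "a4 = k3 - s1*k1"
  have "s1*k2 \<le> 0" "s1*k1 \<le> 0" using k by (simp_all add: mult_nonpos_nonneg)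
  hence apos: "a1 > 0" "a2 > 0" "a3 > 0" "a4 > 0" unfolding a1_def a2_def a3_def a4_def
    using k by linarith+
  obtain l0 l1 l2 l3 where R: "complex_of_real a1 = -(l0+l1+l2+l3)" "complex_of_real a2 = l0*l1+l0*l2+l0*l3+l1*l2+l1*l3+l2*l3"
    "complex_of_real a3 = -(l0*l1*l2+l0*l1*l3+l0*l2*l3+l1*l2*l3)" "complex_of_real a4 = l0*l1*l2*l3"
    by (rule roots4[of "complex_of_real a1" "complex_of_real a2" "complex_of_real a3" "complex_of_real a4"])
  have Hp: "Hur3 a1 a2 a3 a4 > 0" using H unfolding a1_def a2_def a3_def a4_def .
  have re: "Re l < 0" if "l \<in> {l0,l1,l2,l3}" for l
    by (rule hurwitz_suff[OF apos Hp]) (use that P4_roots[OF R, of l] in auto)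
  define DD where "DD = k3^2 - k4^2 * s1"
  have "k4^2 * s1 \<le> 0" using k by (simp add: mult_nonneg_nonpos)
  moreover have "k3^2 > 0" using k by simp
  ultimately have DD: "DD > 0" unfolding DD_def by linarith
  define al where "al = (-(k1+s1)*k3 + k2*k4 * s1)/DD"
  define be where "be = (-k2*k3 + (k1+s1)*k4)/DD"
  have DD0: "DD \<noteq> 0" using DD by simp
  have al': "DD*al = -(k1+s1)*k3 + k2*k4 * s1" using DD0 unfolding al_def by simp
  have be': "DD*be = -k2*k3 + (k1+s1)*k4" using DD0 unfolding be_def by simp
  have "DD*(k3*al + k4 * s1*be + (k1+s1)) = k3*(DD*al) + k4 * s1*(DD*be) + (k1+s1)*DD" by (simp add: algebra_simps)
  also have "\<dots> = 0" by (simp only: al' be') (simp add: DD_def algebra_simps power2_eq_square)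
  finally have i1: "k3*al + k4 * s1*be + (k1+s1) = 0" using DD0 by simp
  have "DD*(k4*al + k3*be + k2) = k4*(DD*al) + k3*(DD*be) + k2*DD" by (simp add: algebra_simps)
  also have "\<dots> = 0" by (simp only: al' be') (simp add: DD_def algebra_simps power2_eq_square)
  finally have i2: "k4*al + k3*be + k2 = 0" using DD0 by simp
  define D0 where "D0 t = E t - (al * xd t + be * vd t)" for t
  define D1 where "D1 t = Z t - (al * vd t + be * (s1 * xd t))" for t
  define D2 where "D2 t = s1 * D0 t + (X t - xd t)" for t
  define D3 where "D3 t = s1 * D1 t + (V t - vd t)" for t
  have d0: "(D0 has_real_derivative D1 t) (at t within {0..})" if t: "t \<ge> 0" for t
  proof (rule fd_eq)
    show "(D0 has_real_derivative (Z t - (al * vd t + be * (s1 * xd t)))) (at t within {0..})"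
      unfolding D0_def[abs_def]
      by (rule DERIV_add DERIV_diff DERIV_cmult dE[OF t] dxd[OF t] dvd[OF t])+
  qed (simp add: D1_def)
  have d1: "(D1 has_real_derivative D2 t) (at t within {0..})" if t: "t \<ge> 0" for t
  proof (rule fd_eq)
    show "(D1 has_real_derivative (s1*E t + X t - xd t - (al * (s1 * xd t) + be * (s1 * vd t)))) (at t within {0..})"
      unfolding D1_def[abs_def]
      by (rule DERIV_add DERIV_diff DERIV_cmult dZ[OF t] dxd[OF t] dvd[OF t])+
  qed (simp add: D2_def D0_def algebra_simps)
  have d2: "(D2 has_real_derivative D3 t) (at t within {0..})" if t: "t \<ge> 0" for t
  proof (rule fd_eq)
    show "(D2 has_real_derivative (s1 * D1 t + (V t - vd t))) (at t within {0..})"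
      unfolding D2_def[abs_def]
      by (rule DERIV_add DERIV_diff DERIV_cmult d0[OF t] dX[OF t] dxd[OF t])+
  qed (simp add: D3_def)
  have d3: "(D3 has_real_derivative (-(a4*D0 t + a3*D1 t + a2*D2 t + a1*D3 t))) (at t within {0..})" if t: "t \<ge> 0" for t
  proof (rule fd_eq)
    show "(D3 has_real_derivative (s1 * D2 t + ((-k1*X t - k2*V t - k3*E t - k4*Z t) - s1 * xd t))) (at t within {0..})"
      unfolding D3_def[abs_def]
      by (rule DERIV_add DERIV_diff DERIV_cmult d1[OF t] dV[OF t] dvd[OF t])+
    have "s1 * D2 t + ((-k1*X t - k2*V t - k3*E t - k4*Z t) - s1 * xd t) - (-(a4*D0 t + a3*D1 t + a2*D2 t + a1*D3 t))
      = - xd t * (k3*al + k4 * s1*be + (k1+s1)) - vd t * (k4*al + k3*be + k2)"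
      unfolding D0_def D1_def D2_def D3_def a1_def a2_def a3_def a4_def by (simp add: algebra_simps)
    also have "\<dots> = 0" using i1 i2 by simp
    finally show "s1 * D2 t + ((-k1*X t - k2*V t - k3*E t - k4*Z t) - s1 * xd t) = (-(a4*D0 t + a3*D1 t + a2*D2 t + a1*D3 t))"
      by simp
  qed
  have c: "(D0 \<longlongrightarrow> 0) at_top" "(D2 \<longlongrightarrow> 0) at_top"
  proof -
    have re0: "Re l0 < 0" "Re l1 < 0" "Re l2 < 0" "Re l3 < 0" by (auto intro: re)
    show "(D0 \<longlongrightarrow> 0) at_top" "(D2 \<longlongrightarrow> 0) at_top" using comp[OF R re0 d0 d1 d2 d3] by auto
  qed
  have "((\<lambda>t. D2 t - s1 * D0 t) \<longlongrightarrow> 0 - s1 * 0) at_top"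
    by (intro tendsto_intros c)
  moreover have "(\<lambda>t. D2 t - s1 * D0 t) = (\<lambda>t. X t - xd t)" by (simp add: fun_eq_iff D2_def)
  ultimately show ?thesis by simp
qed

lemma eta_sum: "(\<Sum>i<n. eta \<alpha> R n X i) = 0"
proof -
  define F where "F p = \<alpha> (norm (X (fst p) - X (snd p))) *\<^sub>R ((1 / norm (X (fst p) - X (snd p))) *\<^sub>R (X (fst p) - X (snd p)))" for p
  define S where "S = Sigma {..<n} (neighbors R n X)"
  have fin: "finite (neighbors R n X i)" for i unfolding neighbors_def by auto
  have "(\<Sum>i<n. eta \<alpha> R n X i) = (\<Sum>i<n. \<Sum>k\<in>neighbors R n X i. F (i,k))" unfolding eta_def F_def by simp
  also have "\<dots> = (\<Sum>p\<in>S. F p)" unfolding S_def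
    using sum.Sigma[of "{..<n}" "neighbors R n X" "\<lambda>i k. F (i,k)"] fin by simp
  finally have 1: "(\<Sum>i<n. eta \<alpha> R n X i) = (\<Sum>p\<in>S. F p)" .
  have "(\<Sum>p\<in>S. F p) = (\<Sum>p\<in>S. F (prod.swap p))"
    by (rule sum.reindex_bij_witness[of _ prod.swap prod.swap]) (auto simp: S_def neighbors_def norm_minus_commute)
  also have "\<dots> = (\<Sum>p\<in>S. - F p)"
    by (rule sum.cong) (auto simp: F_def norm_minus_commute scaleR_diff_right)
  also have "\<dots> = - (\<Sum>p\<in>S. F p)" by (simp add: sum_negf)
  finally have "(\<Sum>p\<in>S. F p) = 0" by (simp add: eq_neg_iff_add_eq_0 scaleR_2[symmetric])
  with 1 show ?thesis by simp
qed

lemma avg_deriv: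
  fixes f :: "nat \<Rightarrow> real \<Rightarrow> vec2" and f' :: "nat \<Rightarrow> vec2" 
  assumes "\<And>i. i < n \<Longrightarrow> (f i has_vector_derivative f' i) F"
  shows "((\<lambda>t. ((1/real n) *\<^sub>R (\<Sum>i<n. f i t)) $ j) has_real_derivative ((1/real n) *\<^sub>R (\<Sum>i<n. f' i)) $ j) F"
proof -
  have "((\<lambda>t. (\<Sum>i<n. f i t)) has_vector_derivative (\<Sum>i<n. f' i)) F"
    using assms by (intro has_vector_derivative_sum) auto
  hence "((\<lambda>t. (1/real n) *\<^sub>R (\<Sum>i<n. f i t)) has_vector_derivative ((1/real n) *\<^sub>R (\<Sum>i<n. f' i))) F"
    by (rule bounded_linear.has_vector_derivative[OF bounded_linear_scaleR_right])
  hence "((\<lambda>t. ((1/real n) *\<^sub>R (\<Sum>i<n. f i t)) $ j) has_vector_derivative ((1/real n) *\<^sub>R (\<Sum>i<n. f' i)) $ j) F"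
    by (rule bounded_linear.has_vector_derivative[OF bounded_linear_vec_nth])
  thus ?thesis by (simp add: has_real_derivative_iff_has_vector_derivative)
qed

lemma comp_deriv:
  fixes f :: "real \<Rightarrow> vec2"
  assumes "(f has_vector_derivative f') F"
  shows "((\<lambda>t. f t $ j) has_real_derivative f' $ j) F"
  using bounded_linear.has_vector_derivative[OF bounded_linear_vec_nth assms]
  by (simp add: has_real_derivative_iff_has_vector_derivative)

lemma suff:
  fixes k1 k2 k3 k4 k5 s1 r R :: real
  assumes k: "k1 > 0" "k2 > 0" "k3 > 0" "k4 > 0" "s1 \<le> 0"
    and H: "Hur3 k2 (k1 - s1) (k4 - s1*k2) (k3 - s1*k1) > 0"
    and n: "n \<ge> 1"
    and sol: "closed_loop_solution s1 k1 k2 k3 k4 k5 \<alpha> r R n x v \<epsilon> \<zeta> xd vd"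
  shows "((\<lambda>t. hull_dist n (\<lambda>i. x i t) (xd t)) \<longlongrightarrow> 0) at_top"
proof -
  define Xb where "Xb t = (1/real n) *\<^sub>R (\<Sum>i<n. x i t)" for t
  define Vb where "Vb t = (1/real n) *\<^sub>R (\<Sum>i<n. v i t)" for t
  define Eb where "Eb t = (1/real n) *\<^sub>R (\<Sum>i<n. \<epsilon> i t)" for t
  define Zb where "Zb t = (1/real n) *\<^sub>R (\<Sum>i<n. \<zeta> i t)" for t
  note S = sol[unfolded closed_loop_solution_def]
  have ncard: "(1/real n) * real n = 1" using n by simp
  have conv: "((\<lambda>t. Xb t $ j - xd t $ j) \<longlongrightarrow> 0) at_top" for j
  proof (rule scal[OF k H])
    fix t :: real assume t: "t \<ge> 0"
    note St = S[rule_format, OF t]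
    show "((\<lambda>t. Xb t $ j) has_real_derivative Vb t $ j) (at t within {0..})"
      unfolding Xb_def Vb_def by (rule avg_deriv) (use St in auto)
    show "((\<lambda>t. Eb t $ j) has_real_derivative Zb t $ j) (at t within {0..})"
      unfolding Eb_def Zb_def by (rule avg_deriv) (use St in auto)
    show "((\<lambda>t. xd t $ j) has_real_derivative vd t $ j) (at t within {0..})"
      by (rule comp_deriv) (use St in auto)
    show "((\<lambda>t. vd t $ j) has_real_derivative s1 * xd t $ j) (at t within {0..})"
      using comp_deriv[of vd "s1 *\<^sub>R xd t" _ j] St by auto
    have Dv: "((\<lambda>t. Vb t $ j) has_real_derivative ((1/real n) *\<^sub>R (\<Sum>i<n. - k1 *\<^sub>R x i t - k2 *\<^sub>R v i t - k3 *\<^sub>R \<epsilon> i t - k4 *\<^sub>R \<zeta> i t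
               + k5 *\<^sub>R eta \<alpha> R n (\<lambda>j. x j t) i)) $ j) (at t within {0..})"
      unfolding Vb_def by (rule avg_deriv) (use St in auto)
    have Ev: "(1/real n) *\<^sub>R (\<Sum>i<n. - k1 *\<^sub>R x i t - k2 *\<^sub>R v i t - k3 *\<^sub>R \<epsilon> i t - k4 *\<^sub>R \<zeta> i t
               + k5 *\<^sub>R eta \<alpha> R n (\<lambda>j. x j t) i)
       = - k1 *\<^sub>R Xb t - k2 *\<^sub>R Vb t - k3 *\<^sub>R Eb t - k4 *\<^sub>R Zb t"
      unfolding Xb_def Vb_def Eb_def Zb_def
      by (simp add: sum.distrib sum_subtractf scaleR_sum_right[symmetric] eta_sum algebra_simps)
    show "((\<lambda>t. Vb t $ j) has_real_derivative (- k1 * Xb t $ j - k2 * Vb t $ j - k3 * Eb t $ j - k4 * Zb t $ j)) (at t within {0..})"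
      using Dv unfolding Ev by simp
    have Dz: "((\<lambda>t. Zb t $ j) has_real_derivative ((1/real n) *\<^sub>R (\<Sum>i<n. s1 *\<^sub>R \<epsilon> i t + (x i t - xd t) - k5 *\<^sub>R eta \<alpha> R n (\<lambda>j. x j t) i)) $ j) (at t within {0..})"
      unfolding Zb_def by (rule avg_deriv) (use St in auto)
    have Ez: "(1/real n) *\<^sub>R (\<Sum>i<n. s1 *\<^sub>R \<epsilon> i t + (x i t - xd t) - k5 *\<^sub>R eta \<alpha> R n (\<lambda>j. x j t) i)
       = s1 *\<^sub>R Eb t + Xb t - xd t"
      unfolding Xb_def Vb_def Eb_def Zb_def using ncard
      by (simp add: sum.distrib sum_subtractf scaleR_sum_right[symmetric] eta_sum algebra_simps sum_constant_scaleR del: sum_constant)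
    show "((\<lambda>t. Zb t $ j) has_real_derivative (s1 * Eb t $ j + Xb t $ j - xd t $ j)) (at t within {0..})"
      using Dz unfolding Ez by simp
  qed
  have "((\<lambda>t. Xb t - xd t) \<longlongrightarrow> 0) at_top"
    by (rule vec_tendstoI) (use conv in simp)
  hence lim: "((\<lambda>t. norm (Xb t - xd t)) \<longlongrightarrow> 0) at_top" by (rule tendsto_norm_zero)
  have mem: "Xb t \<in> convex hull ((\<lambda>i. x i t) ` {..<n})" for t
  proof -
    have "(\<Sum>i<n. (1/real n) *\<^sub>R x i t) \<in> convex hull ((\<lambda>i. x i t) ` {..<n})"
      by (rule convex_sum) (use n in \<open>auto intro: hull_inc\<close>)
    thus ?thesis unfolding Xb_def by (simp add: scaleR_sum_right)
  qed
  show ?thesis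
  proof (rule Lim_null_comparison[OF _ lim])
    show "\<forall>\<^sub>F t in at_top. norm (hull_dist n (\<lambda>i. x i t) (xd t)) \<le> norm (Xb t - xd t)"
    proof (intro always_eventually allI)
      fix t
      have "norm (hull_dist n (\<lambda>i. x i t) (xd t)) = hull_dist n (\<lambda>i. x i t) (xd t)"
        unfolding hull_dist_def real_norm_def by (rule abs_of_nonneg[OF infdist_nonneg])
      also have "\<dots> \<le> dist (xd t) (Xb t)" unfolding hull_dist_def by (rule infdist_le[OF mem])
      finally show "norm (hull_dist n (\<lambda>i. x i t) (xd t)) \<le> norm (Xb t - xd t)"
        by (simp add: dist_norm norm_minus_commute)
    qed
  qed
qed

definition c2v :: "complex \<Rightarrow> vec2" where "c2v z = (\<chi> j. if j = 1 then Re z else Im z)"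

lemma c2v_nth: "c2v z $ 1 = Re z" "c2v z $ 2 = Im z" by (simp_all add: c2v_def)

lemma c2v_add: "c2v (z + w) = c2v z + c2v w" by (simp add: c2v_def vec_eq_iff)
lemma c2v_scaleR: "c2v (r *\<^sub>R z) = r *\<^sub>R c2v z" by (simp add: c2v_def vec_eq_iff)
lemma c2v_norm: "norm (c2v z) = cmod z"
  by (simp add: norm_vec_def L2_set_def sum_2 c2v_nth cmod_def)
lemma c2v_inner: "inner (c2v z) (c2v w) = Re (cnj z * w)"
  by (simp add: inner_vec_def sum_2 c2v_nth)
lemma c2v_bl: "bounded_linear c2v"
  by (rule bounded_linear_intro[where K=1]) (simp_all add: c2v_add c2v_scaleR c2v_norm)

lemma c2v_lin1: "- k1 *\<^sub>R c2v z1 - k2 *\<^sub>R c2v z2 - k3 *\<^sub>R c2v z3 - k4 *\<^sub>R c2v z4 + k5 *\<^sub>R 0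
   = c2v (- of_real k1 * z1 - of_real k2 * z2 - of_real k3 * z3 - of_real k4 * z4)"
  by (simp add: c2v_def vec_eq_iff)
lemma c2v_lin2: "s1 *\<^sub>R c2v z1 + (c2v z2 - 0) - k5 *\<^sub>R 0 = c2v (of_real s1 * z1 + z2)"
  by (simp add: c2v_def vec_eq_iff)

lemma dexp:
  fixes C l :: complex
  shows "((\<lambda>t. C * exp (of_real t * l)) has_vector_derivative (C * (l * exp (of_real t * l)))) (at t within S)"
proof -
  have "((\<lambda>z. exp (z * l)) has_field_derivative exp (of_real t * l) * l) (at (of_real t))"
    by (auto intro!: derivative_eq_intros)
  from has_vector_derivative_real_field[OF this]
  have "((\<lambda>t. exp (of_real t * l)) has_vector_derivative (l * exp (of_real t * l))) (at t within S)"
    by (simp add: mult.commute)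
  thus ?thesis by (rule has_vector_derivative_mult_right)
qed

lemma dc2v:
  fixes C l :: complex
  shows "((\<lambda>t. c2v (C * exp (of_real t * l))) has_vector_derivative c2v (C * (l * exp (of_real t * l)))) (at t within S)"
  by (rule bounded_linear.has_vector_derivative[OF c2v_bl dexp])

lemma nec:
  fixes k1 k2 k3 k4 k5 s1 r R :: real
  assumes k: "k1 > 0" "k2 > 0" "k3 > 0" "k4 > 0" "s1 \<le> 0" and rR: "0 < r" "r < R"
    and H: "Hur3 k2 (k1 - s1) (k4 - s1*k2) (k3 - s1*k1) \<le> 0"
    and n: "n \<ge> 1"
  shows "\<exists>x v \<epsilon> \<zeta> xd vd. closed_loop_solution s1 k1 k2 k3 k4 k5 \<alpha> r R n x v \<epsilon> \<zeta> xd vd \<and>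
     \<not> ((\<lambda>t. hull_dist n (\<lambda>i. x i t) (xd t)) \<longlongrightarrow> 0) at_top"
proof -
  define a1 where "a1 = k2"
  define a2 where "a2 = k1 - s1"
  define a3 where "a3 = k4 - s1*k2"
  define a4 where "a4 = k3 - s1*k1"
  have "s1*k2 \<le> 0" "s1*k1 \<le> 0" using k by (simp_all add: mult_nonpos_nonneg)
  hence apos: "a1 > 0" "a2 > 0" "a3 > 0" "a4 > 0" unfolding a1_def a2_def a3_def a4_def
    using k by linarith+
  obtain l where l: "P4 a1 a2 a3 a4 l = 0" "Re l \<ge> 0"
    using hurwitz_nec[OF apos] H unfolding a1_def a2_def a3_def a4_def by blast
  define q where "q = l^2 - of_real s1"
  have P4e: "P4 a1 a2 a3 a4 l = (l^2 + of_real k2 * l + of_real k1) * q + (of_real k4 * l + of_real k3)"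
    unfolding P4_def q_def a1_def a2_def a3_def a4_def
    by (simp add: algebra_simps power2_eq_square power3_eq_cube power4_eq_xxxx)
  have q0: "q \<noteq> 0"
  proof
    assume "q = 0"
    with P4e l(1) have "of_real k4 * l + of_real k3 = 0" by simp
    hence "k4 * Re l + k3 = 0" by (simp add: complex_eq_iff)
    moreover have "k4 * Re l \<ge> 0" using k l(2) by simp
    ultimately show False using k by linarith
  qed
  define be where "be = 1 / q"
  have key1: "l^2 + of_real k2 * l + of_real k1 + be * (of_real k3 + of_real k4 * l) = 0"
  proof -
    have "(l^2 + of_real k2 * l + of_real k1 + be * (of_real k3 + of_real k4 * l)) * q = 0"
      using P4e l(1) q0 unfolding be_def by (simp add: field_simps)
    thus ?thesis using q0 by simp
  qed
  have key2: "be * l^2 = of_real s1 * be + 1"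
  proof -
    have "be * q = 1" using q0 unfolding be_def by simp
    thus ?thesis unfolding q_def by (simp add: algebra_simps)
  qed
  define ex where "ex t = exp (of_real t * l)" for t
  have exn: "cmod (ex t) \<ge> 1" if "t \<ge> 0" for t
    unfolding ex_def using that l(2) by simp
  define A where "A i = complex_of_real (1 + 2*R*real i)" for i :: nat
  define xs where "xs i t = c2v (A i * ex t)" for i t
  define vs where "vs i t = c2v ((A i * l) * ex t)" for i t
  define es where "es i t = c2v ((be * A i) * ex t)" for i t
  define zs where "zs i t = c2v ((be * A i * l) * ex t)" for i t
  have dist: "norm (xs i t - xs k t) > R" if "i \<noteq> k" "t \<ge> 0" for i k t
  proof -
    have "xs i t - xs k t = c2v ((A i - A k) * ex t)"
      unfolding xs_def by (simp add: c2v_add[symmetric] algebra_simps c2v_def vec_eq_iff)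
    hence "norm (xs i t - xs k t) = cmod (A i - A k) * cmod (ex t)" by (simp add: c2v_norm norm_mult)
    moreover have "cmod (A i - A k) = 2*R*\<bar>real i - real k\<bar>"
    proof -
      have "A i - A k = complex_of_real (2*R*(real i - real k))" unfolding A_def by (simp add: algebra_simps)
      hence "cmod (A i - A k) = \<bar>2*R*(real i - real k)\<bar>" by (simp only: norm_of_real)
      thus ?thesis using rR by (simp add: abs_mult)
    qed
    moreover have "\<bar>real i - real k\<bar> \<ge> 1" using that(1) by linarith
    ultimately have e: "norm (xs i t - xs k t) = (2*R*\<bar>real i - real k\<bar>) * cmod (ex t)"
      and h0: "1 \<le> \<bar>real i - real k\<bar>" by auto
    have h1: "2*R*1 \<le> 2*R*\<bar>real i - real k\<bar>" using rR h0 by (intro mult_left_mono) auto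
    have "2*R*1*1 \<le> (2*R*\<bar>real i - real k\<bar>) * cmod (ex t)"
      using h1 exn[OF that(2)] rR by (intro mult_mono) auto
    hence "norm (xs i t - xs k t) \<ge> 2*R*1*1" using e by simp
    thus ?thesis using rR by simp
  qed
  have eta0: "eta \<alpha> R n (\<lambda>j. xs j t) i = 0" if "t \<ge> 0" for i t
  proof -
    have "neighbors R n (\<lambda>j. xs j t) i = {}"
      unfolding neighbors_def using dist[OF _ that] by (auto simp: not_le intro: less_imp_le) 
         (metis dist not_less that)
    thus ?thesis unfolding eta_def by simp
  qed
  have sol: "closed_loop_solution s1 k1 k2 k3 k4 k5 \<alpha> r R n xs vs es zs (\<lambda>t. 0) (\<lambda>t. 0)"
    unfolding closed_loop_solution_def
  proof (intro allI impI conjI)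
    fix t :: real assume t: "t \<ge> 0"
    show "((\<lambda>t. 0::vec2) has_vector_derivative 0) (at t within {0..})" by simp
    show "((\<lambda>t. 0::vec2) has_vector_derivative s1 *\<^sub>R 0) (at t within {0..})" by simp
    fix i assume i: "i < n"
    show "(xs i has_vector_derivative vs i t) (at t within {0..})"
      using dc2v[of "A i" l t "{0..}"] unfolding xs_def[abs_def] vs_def ex_def by (simp add: mult_ac)
    show "(es i has_vector_derivative zs i t) (at t within {0..})"
      using dc2v[of "be * A i" l t "{0..}"] unfolding es_def[abs_def] zs_def ex_def by (simp add: mult_ac)
    have "c2v (A i * l * (l * ex t)) = c2v (- of_real k1 * (A i * ex t) - of_real k2 * (A i * l * ex t)
         - of_real k3 * (be * A i * ex t) - of_real k4 * (be * A i * l * ex t))"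
    proof -
      have "A i * l * (l * ex t) - (- of_real k1 * (A i * ex t) - of_real k2 * (A i * l * ex t)
         - of_real k3 * (be * A i * ex t) - of_real k4 * (be * A i * l * ex t))
         = A i * ex t * (l^2 + of_real k2 * l + of_real k1 + be * (of_real k3 + of_real k4 * l))"
        by (simp add: algebra_simps power2_eq_square)
      thus ?thesis using key1 by simp
    qed
    thus "(vs i has_vector_derivative
              (- k1 *\<^sub>R xs i t - k2 *\<^sub>R vs i t - k3 *\<^sub>R es i t - k4 *\<^sub>R zs i t
               + k5 *\<^sub>R eta \<alpha> R n (\<lambda>j. xs j t) i)) (at t within {0..})"
      using dc2v[of "A i * l" l t "{0..}"] unfolding eta0[OF t] unfolding xs_def vs_def es_def zs_def
      unfolding c2v_lin1 unfolding vs_def[abs_def] ex_def by simp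
    have "c2v (be * A i * l * (l * ex t)) = c2v (of_real s1 * (be * A i * ex t) + A i * ex t)"
    proof -
      have "be * A i * l * (l * ex t) = A i * ex t * (be * l^2)" by (simp add: algebra_simps power2_eq_square)
      also have "\<dots> = of_real s1 * (be * A i * ex t) + A i * ex t" unfolding key2 by (simp add: algebra_simps)
      finally show ?thesis by simp
    qed
    thus "(zs i has_vector_derivative
              (s1 *\<^sub>R es i t + (xs i t - 0) - k5 *\<^sub>R eta \<alpha> R n (\<lambda>j. xs j t) i))
              (at t within {0..})"
      using dc2v[of "be * A i * l" l t "{0..}"] unfolding eta0[OF t] unfolding xs_def es_def
      unfolding c2v_lin2 unfolding zs_def[abs_def] ex_def by simp
  next
    fix t :: real and i k assume "t \<ge> 0" "i < n" "k < n" "i \<noteq> k"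
    thus "r < norm (xs i t - xs k t)" using dist[of i k t] rR by simp
  qed
  have ge1: "hull_dist n (\<lambda>i. xs i t) 0 \<ge> 1" if t: "t \<ge> 0" for t
  proof -
    define m where "m = cmod (ex t)"
    have m1: "m \<ge> 1" unfolding m_def by (rule exn[OF t])
    define w where "w = c2v (ex t / of_real m)"
    have nw: "norm w = 1" unfolding w_def c2v_norm using m1 by (simp add: norm_divide m_def ex_def)
    have inw: "inner w (xs i t) \<ge> 1" if "i < n" for i
    proof -
      have "cnj (ex t / of_real m) * (A i * ex t) = A i * (ex t * cnj (ex t)) / of_real m"
        by (simp add: algebra_simps)
      also have "\<dots> = of_real ((1 + 2*R*real i) * m)"
        unfolding complex_norm_square[symmetric] A_def m_def[symmetric] using m1
        by (simp add: power2_eq_square field_simps)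
      finally have "inner w (xs i t) = (1 + 2*R*real i) * m"
        unfolding w_def xs_def c2v_inner by simp
      moreover have "(1 + 2*R*real i) * m \<ge> 1 * 1"
        using m1 rR by (intro mult_mono) auto
      ultimately show ?thesis by simp
    qed
    define Hs where "Hs = convex hull ((\<lambda>i. xs i t) ` {..<n})"
    have sub: "Hs \<subseteq> {y. inner w y \<ge> 1}"
      unfolding Hs_def by (rule hull_minimal) (use inw convex_halfspace_ge in auto)
    have ne: "Hs \<noteq> {}" unfolding Hs_def using n by (auto simp: lessThan_empty_iff)
    have "1 \<le> (INF y\<in>Hs. dist 0 y)"
    proof (rule cINF_greatest[OF ne])
      fix y assume "y \<in> Hs"
      hence "1 \<le> inner w y" using sub by auto
      also have "\<dots> \<le> norm w * norm y" by (rule norm_cauchy_schwarz)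
      finally show "1 \<le> dist 0 y" using nw by simp
    qed
    thus ?thesis unfolding hull_dist_def Hs_def[symmetric] infdist_notempty[OF ne] .
  qed
  have "\<not> ((\<lambda>t. hull_dist n (\<lambda>i. xs i t) 0) \<longlongrightarrow> 0) at_top"
  proof
    assume "((\<lambda>t. hull_dist n (\<lambda>i. xs i t) 0) \<longlongrightarrow> 0) at_top"
    hence "eventually (\<lambda>t. hull_dist n (\<lambda>i. xs i t) 0 < 1) at_top"
      by (rule order_tendstoD) simp
    moreover have "eventually (\<lambda>t. t \<ge> (0::real)) at_top" by (rule eventually_ge_at_top)
    ultimately have "eventually (\<lambda>t. hull_dist n (\<lambda>i. xs i t) 0 < 1 \<and> t \<ge> 0) at_top"
      by (rule eventually_conj)
    then obtain N where N: "\<And>t. t \<ge> N \<Longrightarrow> hull_dist n (\<lambda>i. xs i t) 0 < 1 \<and> t \<ge> 0"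
      unfolding eventually_at_top_linorder by blast
    from N[of N] ge1[of N] show False by linarith
  qed
  with sol show ?thesis by blast
qed

lemma cond_iff:
  fixes k1 k2 k3 k4 s1 :: real
  assumes k: "k1 > 0" "k2 > 0" "k3 > 0" "k4 > 0" "s1 \<le> 0"
  shows "(k4 - s1 * k2 - k2\<^sup>2 * (k3 - s1 * k1) / (k1 * k2 - k4) > 0 \<and> (k1 * k2 - k4) / k2 > 0)
     \<longleftrightarrow> Hur3 k2 (k1 - s1) (k4 - s1*k2) (k3 - s1*k1) > 0"
proof -
  define d where "d = k1 * k2 - k4"
  define a3 where "a3 = k4 - s1*k2"
  define a4 where "a4 = k3 - s1*k1"
  have "s1*k2 \<le> 0" "s1*k1 \<le> 0" using k by (simp_all add: mult_nonpos_nonneg)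
  hence a: "a3 > 0" "a4 > 0" unfolding a3_def a4_def using k by linarith+
  have Hd: "Hur3 k2 (k1 - s1) (k4 - s1*k2) (k3 - s1*k1) = a3 * d - k2^2 * a4"
    unfolding Hur3_def a3_def a4_def d_def by (simp add: algebra_simps)
  have L: "(k4 - s1 * k2 - k2\<^sup>2 * (k3 - s1 * k1) / (k1 * k2 - k4) > 0 \<and> (k1 * k2 - k4) / k2 > 0)
     \<longleftrightarrow> (a3 - k2^2 * a4 / d > 0 \<and> d / k2 > 0)"
    unfolding a3_def a4_def d_def by simp
  have "k2^2 * a4 > 0" using a k by simp
  show ?thesis unfolding L Hd
  proof
    assume A: "a3 - k2^2 * a4 / d > 0 \<and> d / k2 > 0"
    hence d: "d > 0" using k by (simp add: zero_less_divide_iff)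
    have "a3 - k2^2 * a4 / d = (a3 * d - k2^2 * a4) / d" using d by (simp add: field_simps)
    with A d show "a3 * d - k2^2 * a4 > 0" by (simp add: zero_less_divide_iff)
  next
    assume B: "a3 * d - k2^2 * a4 > 0"
    with \<open>k2^2 * a4 > 0\<close> have "a3 * d > 0" by linarith
    hence d: "d > 0" using a by (simp add: zero_less_mult_iff)
    have "a3 - k2^2 * a4 / d = (a3 * d - k2^2 * a4) / d" using d by (simp add: field_simps)
    with B d k show "a3 - k2^2 * a4 / d > 0 \<and> d / k2 > 0" by simp
  qed
qed

theorem lemma3p4:
  fixes r R s1 k1 k2 k3 k4 k5 :: real and \<alpha> :: "real \<Rightarrow> real" and n :: nat
  assumes "0 < r" and "r < R"
    and "continuous_on {r<..} \<alpha>"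
    and "\<forall>s\<ge>R. \<alpha> s = 0"
    and "filterlim \<alpha> at_top (at_right r)"
    and "antimono_on {r<..R} \<alpha>"
    and "s1 \<le> 0"
    and "k1 > 0" and "k2 > 0" and "k3 > 0" and "k4 > 0" and "k5 > 0"
    and "n \<ge> 1"
  shows "(\<forall>x v \<epsilon> \<zeta> xd vd.
            closed_loop_solution s1 k1 k2 k3 k4 k5 \<alpha> r R n x v \<epsilon> \<zeta> xd vd \<longrightarrow>
            ((\<lambda>t. hull_dist n (\<lambda>i. x i t) (xd t)) \<longlongrightarrow> 0) at_top)
         \<longleftrightarrow>
         (k4 - s1 * k2 - k2\<^sup>2 * (k3 - s1 * k1) / (k1 * k2 - k4) > 0 \<and>
          (k1 * k2 - k4) / k2 > 0)"
proof -
  have cond: "(k4 - s1 * k2 - k2\<^sup>2 * (k3 - s1 * k1) / (k1 * k2 - k4) > 0 \<and> (k1 * k2 - k4) / k2 > 0)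
     \<longleftrightarrow> Hur3 k2 (k1 - s1) (k4 - s1*k2) (k3 - s1*k1) > 0"
    by (rule cond_iff) (use assms in auto)
  show ?thesis unfolding cond
  proof
    assume A: "\<forall>x v \<epsilon> \<zeta> xd vd.
            closed_loop_solution s1 k1 k2 k3 k4 k5 \<alpha> r R n x v \<epsilon> \<zeta> xd vd \<longrightarrow>
            ((\<lambda>t. hull_dist n (\<lambda>i. x i t) (xd t)) \<longlongrightarrow> 0) at_top"
    show "Hur3 k2 (k1 - s1) (k4 - s1*k2) (k3 - s1*k1) > 0"
    proof (rule ccontr)
      assume "\<not> Hur3 k2 (k1 - s1) (k4 - s1*k2) (k3 - s1*k1) > 0"
      hence "Hur3 k2 (k1 - s1) (k4 - s1*k2) (k3 - s1*k1) \<le> 0" by simp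
      hence "\<exists>x v \<epsilon> \<zeta> xd vd. closed_loop_solution s1 k1 k2 k3 k4 k5 \<alpha> r R n x v \<epsilon> \<zeta> xd vd \<and>
        \<not> ((\<lambda>t. hull_dist n (\<lambda>i. x i t) (xd t)) \<longlongrightarrow> 0) at_top"
        by (intro nec) (use assms in auto)
      with A show False by blast
    qed
  next
    assume H: "Hur3 k2 (k1 - s1) (k4 - s1*k2) (k3 - s1*k1) > 0"
    show "\<forall>x v \<epsilon> \<zeta> xd vd.
            closed_loop_solution s1 k1 k2 k3 k4 k5 \<alpha> r R n x v \<epsilon> \<zeta> xd vd \<longrightarrow>
            ((\<lambda>t. hull_dist n (\<lambda>i. x i t) (xd t)) \<longlongrightarrow> 0) at_top"
      using suff[OF _ _ _ _ _ H] assms by blast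
  qed
qed

end
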